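(* Let $K$ be a finite ordered simplicial complex. Then there exists $C\in\mathbb{N}$ such that every crystalline subdivision $K_\ell$, $\ell\in\mathbb{N}$, of $K$ admits a coloring of size $C$.
   Context: A simplicial complex is a locally finite set of linear simplices in $\mathbb{R}^N$ closed under faces with pairwise intersections common faces; ordered means vertices totally ordered. $K_\ell$ is the $\ell$th crystalline subdivision: for an ordered $m$-simplex $\langle v_0,\dots,v_m\rangle$, $m>0$, let $\iota$ be the affine map into $[0,1]^m$ with $\iota(v_j)=(0,\dots,0,1,\dots,1)$ ($j$ zeros followed by $m-j$ ones); subdivide $[0,1]^m$ into $2^{\ell m}$ cubes of side $2^{-\ell}$, each into the $m!$ rescaled translates of $\{0\le x_{\pi(1)}\le\dots\le x_{\pi(m)}\le1\}$, and pull back via $\iota$; apply to all simplices of $K$. Two simplices are adjacent if they share a face; the star of a simplex is the set of simplices adjacent to it together with their faces. A coloring of size $C$ of a complex is a surjective map $c$ from its set of top-dimensional simplices to $\{0,\dots,C\}$ such that $c(\Delta)\neq c(\Delta')$ for distinct top simplices $\Delta,\Delta'$ whose stars intersect. *)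

theory Defs
  imports "HOL-Analysis.Analysis"
begin

text \<open>A (geometric) simplex in a Euclidean space is represented by its finite, nonempty,
  affinely independent vertex set; the simplex itself is its convex hull.\<close>

definition simplex_vs :: "'a::euclidean_space set \<Rightarrow> bool" where
  "simplex_vs S \<longleftrightarrow> finite S \<and> S \<noteq> {} \<and> \<not> affine_dependent S"

definition geom_simplicial_complex :: "'a::euclidean_space set set \<Rightarrow> bool" where
  "geom_simplicial_complex K \<longleftrightarrow>
     (\<forall>S\<in>K. simplex_vs S) \<and>
     (\<forall>S\<in>K. \<forall>T. T \<subseteq> S \<and> T \<noteq> {} \<longrightarrow> T \<in> K) \<and>
     (\<forall>S\<in>K. \<forall>T\<in>K. convex hull S \<inter> convex hull T = convex hull (S \<inter> T))"

definition ord_vertex :: "('a \<times> 'a) set \<Rightarrow> 'a set \<Rightarrow> nat \<Rightarrow> 'a" where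
  "ord_vertex r S j = (THE v. v \<in> S \<and> card {w \<in> S. (w, v) \<in> r \<and> w \<noteq> v} = j)"

text \<open>The inverse of the affine map iota: R^m -> aff(S) (coordinates x 1, ..., x m),
  sending (0,...,0,1,...,1) (j zeros, m-j ones) to the j-th vertex v_j.\<close>
definition iota_inv :: "('a \<times> 'a) set \<Rightarrow> 'a::euclidean_space set \<Rightarrow> (nat \<Rightarrow> real) \<Rightarrow> 'a" where
  "iota_inv r S x =
     (let m = card S - 1;
          x' = (\<lambda>i. if i = 0 then 0 else if i = m + 1 then 1 else x i)
      in \<Sum>j\<le>m. (x' (j + 1) - x' j) *\<^sub>R ord_vertex r S j)"

text \<open>Vertices of the small simplex of the l-th subdivision of [0,1]^m determined by the
  cube with lower corner k/2^l (k i < 2^l) and the permutation p of {1..m}: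
  the i-th vertex (i = 0..m) is  (k + sum_{j>i} e_(p j)) / 2^l.\<close>
definition cube_vertex :: "nat \<Rightarrow> nat \<Rightarrow> (nat \<Rightarrow> nat) \<Rightarrow> (nat \<Rightarrow> nat) \<Rightarrow> nat \<Rightarrow> (nat \<Rightarrow> real)" where
  "cube_vertex l m k p i =
     (\<lambda>t. (real (k t) + (if t \<in> p ` {i+1..m} then 1 else 0)) / 2 ^ l)"

text \<open>The top-dimensional pieces into which the l-th crystalline subdivision cuts the
  ordered simplex S (for a vertex, S itself): pullbacks under iota of those small simplices
  of [0,1]^m that lie in iota(S) = {0 \<le> x_1 \<le> ... \<le> x_m \<le> 1}.\<close>
definition crystal_pieces :: "('a \<times> 'a) set \<Rightarrow> nat \<Rightarrow> 'a::euclidean_space set \<Rightarrow> 'a set set" where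
  "crystal_pieces r l S =
     (let m = card S - 1 in
      if m = 0 then {S}
      else {iota_inv r S ` {cube_vertex l m k p i | i. i \<le> m} | k p.
              (\<forall>t\<in>{1..m}. k t < 2 ^ l) \<and> p permutes {1..m} \<and>
              (\<forall>i\<le>m. \<forall>s t. 1 \<le> s \<and> s \<le> t \<and> t \<le> m \<longrightarrow>
                  cube_vertex l m k p i s \<le> cube_vertex l m k p i t)})"

definition crystalline :: "('a \<times> 'a) set \<Rightarrow> 'a::euclidean_space set set \<Rightarrow> nat \<Rightarrow> 'a set set" where
  "crystalline r K l = {T. T \<noteq> {} \<and> (\<exists>S\<in>K. \<exists>U\<in>crystal_pieces r l S. T \<subseteq> U)}"

definition top_simplices :: "'a set set \<Rightarrow> 'a set set" where
  "top_simplices L = {T \<in> L. card T = Max (card ` L)}"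

definition star :: "'a set set \<Rightarrow> 'a set \<Rightarrow> 'a set set" where
  "star L T = {U \<in> L. \<exists>V\<in>L. V \<inter> T \<noteq> {} \<and> U \<subseteq> V}"

definition is_coloring :: "'a set set \<Rightarrow> ('a set \<Rightarrow> nat) \<Rightarrow> nat \<Rightarrow> bool" where
  "is_coloring L c C \<longleftrightarrow>
     c ` top_simplices L = {0..C} \<and>
     (\<forall>D\<in>top_simplices L. \<forall>D'\<in>top_simplices L.
        D \<noteq> D' \<and> star L D \<inter> star L D' \<noteq> {} \<longrightarrow> c D \<noteq> c D')"

end

theory Submission
  imports Defs
begin

lemma greedy_coloring:
  fixes A :: "'b set" and R :: "'b \<Rightarrow> 'b \<Rightarrow> bool"
  assumes "finite A" and symR: "\<And>x y. R x y \<Longrightarrow> R y x"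
    and "\<forall>x\<in>A. card {y\<in>A. y \<noteq> x \<and> R x y} \<le> B"
  shows "\<exists>c. (\<forall>x\<in>A. c x \<le> B) \<and> (\<forall>x\<in>A. \<forall>y\<in>A. x \<noteq> y \<and> R x y \<longrightarrow> c x \<noteq> c y)"
  using assms(1,3)
proof (induction A rule: finite_induct)
  case empty
  then show ?case by auto
next
  case (insert x F)
  have "\<forall>z\<in>F. card {y\<in>F. y \<noteq> z \<and> R z y} \<le> B"
  proof
    fix z assume "z \<in> F"
    have "card {y\<in>F. y \<noteq> z \<and> R z y} \<le> card {y\<in>insert x F. y \<noteq> z \<and> R z y}"
      by (rule card_mono) (use insert.hyps(1) in auto)
    then show "card {y\<in>F. y \<noteq> z \<and> R z y} \<le> B" using bspec[OF insert.prems insertI2[OF \<open>z \<in> F\<close>]] by linarith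
  qed
  then have "\<exists>c. (\<forall>x\<in>F. c x \<le> B) \<and> (\<forall>x\<in>F. \<forall>y\<in>F. x \<noteq> y \<and> R x y \<longrightarrow> c x \<noteq> c y)"
    by (rule insert.IH)
  then obtain c where c: "\<forall>x\<in>F. c x \<le> B" "\<forall>x\<in>F. \<forall>y\<in>F. x \<noteq> y \<and> R x y \<longrightarrow> c x \<noteq> c y"
    by (elim exE conjE)
  define N where "N = {y\<in>F. R x y}"
  have "card (c ` N) \<le> card N" using insert.hyps(1) N_def by (intro card_image_le) auto
  also have "card N \<le> card {y\<in>insert x F. y \<noteq> x \<and> R x y}"
    by (rule card_mono) (use insert.hyps N_def in auto)
  also have "\<dots> \<le> B" using bspec[OF insert.prems insertI1] .
  finally have cN: "card (c ` N) \<le> B" .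
  have "\<not> {0..B} \<subseteq> c ` N"
  proof
    assume "{0..B} \<subseteq> c ` N"
    then have "card {0..B} \<le> card (c ` N)" using insert.hyps(1) N_def by (intro card_mono) auto
    then show False using cN by simp
  qed
  then obtain n where n0: "n \<in> {0..B}" "n \<notin> c ` N" by blast
  then have n: "n \<le> B" "n \<notin> c ` N" by auto
  define c' where "c' = c(x := n)"
  show ?case
  proof (intro exI[of _ c'] conjI ballI impI)
    fix z assume "z \<in> insert x F" then show "c' z \<le> B" using c n c'_def by auto
  next
    fix y z assume yz: "y \<in> insert x F" "z \<in> insert x F" "y \<noteq> z \<and> R y z"
    show "c' y \<noteq> c' z"
    proof (cases "y = x")
      case True
      then have "z \<in> N" using yz N_def by auto
      then show ?thesis using True yz n c'_def by auto
    next
      case False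
      note F1 = this
      show ?thesis
      proof (cases "z = x")
        case True
        then have "y \<in> N" using yz N_def symR F1 by auto
        then have "c y \<in> c ` N" by blast
        then show ?thesis using True n c'_def F1 by auto
      next
        case False
        then have "c' y = c y" "c' z = c z" using F1 c'_def by auto
        moreover have "y \<in> F" "z \<in> F" using F1 False yz by auto
        ultimately show ?thesis using c(2) yz by auto
      qed
    qed
  qed
qed

lemma compress_coloring:
  fixes A :: "'b set" and c :: "'b \<Rightarrow> nat"
  assumes "finite A" "A \<noteq> {}" "\<forall>x\<in>A. c x \<le> B"
  shows "\<exists>C'\<le>B. \<exists>c'. c' ` A = {0..C'} \<and> (\<forall>x\<in>A. \<forall>y\<in>A. c x \<noteq> c y \<longrightarrow> c' x \<noteq> c' y)"
proof -
  define I where "I = c ` A"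
  have fI: "finite I" "I \<noteq> {}" using assms I_def by auto
  define h where "h n = card {m\<in>I. m < n}" for n
  have mono: "h n1 < h n2" if "n1 \<in> I" "n2 \<in> I" "n1 < n2" for n1 n2
  proof -
    have "{m\<in>I. m < n1} \<subset> {m\<in>I. m < n2}" using that by auto
    then show ?thesis unfolding h_def using fI by (intro psubset_card_mono) auto
  qed
  have inj: "inj_on h I"
  proof (rule inj_onI)
    fix a b assume ab: "a \<in> I" "b \<in> I" "h a = h b"
    show "a = b"
    proof (rule ccontr)
      assume "a \<noteq> b"
      then have "a < b \<or> b < a" by arith
      then show False using mono[of a b] mono[of b a] ab by auto
    qed
  qed
  have sub: "h ` I \<subseteq> {..<card I}"
  proof
    fix y assume "y \<in> h ` I"
    then obtain n where "n \<in> I" "y = h n" by auto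
    then have "{m\<in>I. m < n} \<subset> I" by auto
    then show "y \<in> {..<card I}" unfolding \<open>y = h n\<close> h_def using fI by (auto intro: psubset_card_mono)
  qed
  have "card (h ` I) = card {..<card I}" using card_image[OF inj] by simp
  then have eq: "h ` I = {..<card I}" using sub by (intro card_subset_eq) auto
  have "card I \<le> card {0..B}" using assms I_def by (intro card_mono) auto
  then have cI: "card I - 1 \<le> B" by simp
  have "{..<card I} = {0..card I - 1}" using fI card_gt_0_iff[of I] by auto
  then have "(h \<circ> c) ` A = {0..card I - 1}" using eq I_def by (simp add: image_comp)
  moreover have "\<forall>x\<in>A. \<forall>y\<in>A. c x \<noteq> c y \<longrightarrow> (h \<circ> c) x \<noteq> (h \<circ> c) y"
    using inj I_def by (auto simp: inj_on_def)
  ultimately show ?thesis using cI by (intro exI[of _ "card I - 1"] conjI exI[of _ "h \<circ> c"]) auto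
qed

lemma card_UN_bound:
  assumes "finite X" "\<forall>x\<in>X. card (F x) \<le> k"
  shows "card (\<Union>x\<in>X. F x) \<le> card X * k"
proof -
  have "card (\<Union>x\<in>X. F x) \<le> (\<Sum>x\<in>X. card (F x))" using assms(1) by (rule card_UN_le)
  also have "\<dots> \<le> (\<Sum>x\<in>X. k)" using assms(2) by (intro sum_mono) auto
  finally show ?thesis by simp
qed

definition nbh :: "'b set set \<Rightarrow> 'b set \<Rightarrow> 'b set" where
  "nbh P X = (\<Union>x\<in>X. \<Union>U\<in>{U\<in>P. x \<in> U}. U)"

lemma nbh_bound:
  assumes "finite P" "\<forall>U\<in>P. finite U \<and> card U \<le> a" "\<forall>q. card {U\<in>P. q \<in> U} \<le> b" "finite X"
  shows "finite (nbh P X) \<and> card (nbh P X) \<le> card X * (b * a)"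
proof
  show "finite (nbh P X)" unfolding nbh_def using assms by auto
  have "\<forall>x\<in>X. card (\<Union>U\<in>{U\<in>P. x \<in> U}. U) \<le> b * a"
  proof
    fix x assume "x \<in> X"
    have "card (\<Union>U\<in>{U\<in>P. x \<in> U}. U) \<le> card {U\<in>P. x \<in> U} * a"
      using assms(1,2) by (intro card_UN_bound) auto
    also have "\<dots> \<le> b * a" using assms(3) by (intro mult_right_mono) auto
    finally show "card (\<Union>U\<in>{U\<in>P. x \<in> U}. U) \<le> b * a" .
  qed
  then show "card (nbh P X) \<le> card X * (b * a)" unfolding nbh_def using assms(4)
    by (intro card_UN_bound) auto
qed

lemma conflict_bound:
  assumes P: "finite P" "\<forall>U\<in>P. finite U \<and> card U \<le> a" "\<forall>q. card {U\<in>P. q \<in> U} \<le> b"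
    and L: "L = {T. T \<noteq> {} \<and> (\<exists>U\<in>P. T \<subseteq> U)}" and D: "D \<in> L"
  shows "card {D'\<in>L. star L D \<inter> star L D' \<noteq> {}} \<le> a * (b * a) * (b * a) * (b * 2 ^ a)"
proof -
  obtain U where U: "U \<in> P" "D \<subseteq> U" using D L by auto
  have fD: "finite D" using U P(2) finite_subset by blast
  have cD: "card D \<le> a" using U P(2) card_mono[of U D] by auto
  define N1 where "N1 = nbh P D"
  define N2 where "N2 = nbh P N1"
  have f1: "finite N1" "card N1 \<le> card D * (b * a)" using nbh_bound[OF P fD] N1_def by auto
  have f2: "finite N2" "card N2 \<le> card N1 * (b * a)" using nbh_bound[OF P f1(1)] N2_def by auto
  have sub: "{D'\<in>L. star L D \<inter> star L D' \<noteq> {}} \<subseteq> (\<Union>y\<in>N2. \<Union>W\<in>{W\<in>P. y \<in> W}. Pow W)"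
  proof
    fix D' assume "D' \<in> {D'\<in>L. star L D \<inter> star L D' \<noteq> {}}"
    then have D': "D' \<in> L" and st: "star L D \<inter> star L D' \<noteq> {}" by auto
    then obtain U0 where U0: "U0 \<in> star L D" "U0 \<in> star L D'" by blast
    then obtain V V' where V: "U0 \<in> L" "V \<in> L" "V \<inter> D \<noteq> {}" "U0 \<subseteq> V"
      and V': "V' \<in> L" "V' \<inter> D' \<noteq> {}" "U0 \<subseteq> V'"
      unfolding star_def by auto
    obtain u where u: "u \<in> U0" using V(1) L by auto
    obtain W where W: "W \<in> P" "V \<subseteq> W" using V(2) L by auto
    obtain W' where W': "W' \<in> P" "V' \<subseteq> W'" using V'(1) L by auto
    obtain W'' where W'': "W'' \<in> P" "D' \<subseteq> W''" using D' L by auto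
    obtain x where x: "x \<in> V" "x \<in> D" using V(3) by auto
    obtain y where y: "y \<in> V'" "y \<in> D'" using V'(2) by auto
    have "u \<in> N1" unfolding N1_def nbh_def using x W u V(4) by blast
    then have "y \<in> N2" unfolding N2_def nbh_def using y W' u V'(3) by blast
    then show "D' \<in> (\<Union>y\<in>N2. \<Union>W\<in>{W\<in>P. y \<in> W}. Pow W)" using W'' y by blast
  qed
  have "\<forall>y\<in>N2. card (\<Union>W\<in>{W\<in>P. y \<in> W}. Pow W) \<le> b * 2 ^ a"
  proof
    fix y assume "y \<in> N2"
    have "card (\<Union>W\<in>{W\<in>P. y \<in> W}. Pow W) \<le> card {W\<in>P. y \<in> W} * 2 ^ a"
      using P(1,2) by (intro card_UN_bound) (auto simp: card_Pow power_increasing)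
    also have "\<dots> \<le> b * 2 ^ a" using P(3) by (intro mult_right_mono) auto
    finally show "card (\<Union>W\<in>{W\<in>P. y \<in> W}. Pow W) \<le> b * 2 ^ a" .
  qed
  then have "card (\<Union>y\<in>N2. \<Union>W\<in>{W\<in>P. y \<in> W}. Pow W) \<le> card N2 * (b * 2 ^ a)"
    using f2(1) by (intro card_UN_bound) auto
  moreover have "finite (\<Union>y\<in>N2. \<Union>W\<in>{W\<in>P. y \<in> W}. Pow W)" using f2(1) P by auto
  ultimately have "card {D'\<in>L. star L D \<inter> star L D' \<noteq> {}} \<le> card N2 * (b * 2 ^ a)"
    using card_mono[OF _ sub] by linarith
  also have "\<dots> \<le> card N1 * (b * a) * (b * 2 ^ a)" using f2(2) by (intro mult_right_mono) auto
  also have "\<dots> \<le> card D * (b * a) * (b * a) * (b * 2 ^ a)" using f1(2) by (intro mult_right_mono) auto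
  also have "\<dots> \<le> a * (b * a) * (b * a) * (b * 2 ^ a)" using cD by (intro mult_right_mono) auto
  finally show ?thesis .
qed

definition rk :: "('a \<times> 'a) set \<Rightarrow> 'a set \<Rightarrow> 'a \<Rightarrow> nat" where
  "rk r S w = card {w'\<in>S. (w', w) \<in> r \<and> w' \<noteq> w}"

lemma rk_less:
  assumes "finite S" "w \<in> S" shows "rk r S w < card S"
proof -
  have "{w'\<in>S. (w', w) \<in> r \<and> w' \<noteq> w} \<subset> S" using assms by auto
  then show ?thesis unfolding rk_def using assms by (intro psubset_card_mono) auto
qed

lemma rk_inj:
  assumes "finite S" "S \<subseteq> X" "linear_order_on X r"
  shows "inj_on (rk r S) S"
proof -
  have tot: "\<And>a b. a \<in> X \<Longrightarrow> b \<in> X \<Longrightarrow> a \<noteq> b \<Longrightarrow> (a, b) \<in> r \<or> (b, a) \<in> r"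
    using assms(3) unfolding linear_order_on_def total_on_def by blast
  have trn: "\<And>a b c. (a, b) \<in> r \<Longrightarrow> (b, c) \<in> r \<Longrightarrow> (a, c) \<in> r"
    using assms(3) unfolding linear_order_on_def partial_order_on_def preorder_on_def trans_def by blast
  have ans: "\<And>a b. (a, b) \<in> r \<Longrightarrow> (b, a) \<in> r \<Longrightarrow> a = b"
    using assms(3) unfolding linear_order_on_def partial_order_on_def antisym_def by blast
  have lt: "rk r S a < rk r S b" if "a \<in> S" "b \<in> S" "a \<noteq> b" "(a, b) \<in> r" for a b
  proof -
    have "{w'\<in>S. (w', a) \<in> r \<and> w' \<noteq> a} \<subset> {w'\<in>S. (w', b) \<in> r \<and> w' \<noteq> b}"
    proof
      show "{w'\<in>S. (w', a) \<in> r \<and> w' \<noteq> a} \<subseteq> {w'\<in>S. (w', b) \<in> r \<and> w' \<noteq> b}"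
      proof
        fix w assume "w \<in> {w'\<in>S. (w', a) \<in> r \<and> w' \<noteq> a}"
        then have w: "w \<in> S" "(w, a) \<in> r" "w \<noteq> a" by auto
        have wb: "(w, b) \<in> r" using trn[OF w(2) that(4)] .
        have "w \<noteq> b" using ans[OF that(4)] w that(3) by auto
        then show "w \<in> {w'\<in>S. (w', b) \<in> r \<and> w' \<noteq> b}" using w wb by auto
      qed
      show "{w'\<in>S. (w', a) \<in> r \<and> w' \<noteq> a} \<noteq> {w'\<in>S. (w', b) \<in> r \<and> w' \<noteq> b}"
        using that by blast
    qed
    then show ?thesis unfolding rk_def using assms(1) by (intro psubset_card_mono) auto
  qed
  show ?thesis
  proof (rule inj_onI, rule ccontr)
    fix a b assume ab: "a \<in> S" "b \<in> S" "rk r S a = rk r S b" "a \<noteq> b"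
    then have "(a, b) \<in> r \<or> (b, a) \<in> r" using tot assms(2) by blast
    then show False using lt[of a b] lt[of b a] ab by auto
  qed
qed

lemma rk_bij:
  assumes "finite S" "S \<subseteq> X" "linear_order_on X r"
  shows "bij_betw (rk r S) S {..<card S}"
proof -
  have inj: "inj_on (rk r S) S" using rk_inj[OF assms] .
  have sub: "rk r S ` S \<subseteq> {..<card S}" using rk_less[OF assms(1)] by auto
  have "card (rk r S ` S) = card {..<card S}" using card_image[OF inj] by simp
  then have "rk r S ` S = {..<card S}" using sub by (intro card_subset_eq) auto
  then show ?thesis using inj unfolding bij_betw_def by auto
qed

lemma ord_vertex_rk:
  assumes "finite S" "S \<subseteq> X" "linear_order_on X r" "j < card S"
  shows "ord_vertex r S j \<in> S \<and> rk r S (ord_vertex r S j) = j"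
proof -
  have b: "bij_betw (rk r S) S {..<card S}" using rk_bij[OF assms(1-3)] .
  then have "j \<in> rk r S ` S" using assms(4) unfolding bij_betw_def by auto
  then obtain v where v: "v \<in> S" "rk r S v = j" by (elim imageE) auto
  have "ord_vertex r S j = v" unfolding ord_vertex_def
  proof (rule the_equality)
    show "v \<in> S \<and> card {w \<in> S. (w, v) \<in> r \<and> w \<noteq> v} = j" using v unfolding rk_def by auto
    fix u assume "u \<in> S \<and> card {w \<in> S. (w, u) \<in> r \<and> w \<noteq> u} = j"
    then have "u \<in> S" "rk r S u = rk r S v" using v unfolding rk_def by auto
    then show "u = v" using b v(1) unfolding bij_betw_def inj_on_def by blast
  qed
  then show ?thesis using v by simp
qed

lemma ord_vertex_rk2:
  assumes "finite S" "S \<subseteq> X" "linear_order_on X r" "w \<in> S"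
  shows "ord_vertex r S (rk r S w) = w"
proof -
  have "rk r S w < card S" using rk_less[OF assms(1,4)] .
  then have h: "ord_vertex r S (rk r S w) \<in> S \<and> rk r S (ord_vertex r S (rk r S w)) = rk r S w"
    using ord_vertex_rk[OF assms(1-3)] by simp
  show ?thesis using inj_onD[OF rk_inj[OF assms(1-3)] conjunct2[OF h] conjunct1[OF h] assms(4)] .
qed

definition xp :: "nat \<Rightarrow> (nat \<Rightarrow> real) \<Rightarrow> nat \<Rightarrow> real" where
  "xp m x i = (if i = 0 then 0 else if i = m + 1 then 1 else x i)"

lemma iota_inv_alt:
  "iota_inv r S x = (\<Sum>j\<le>card S - 1. (xp (card S - 1) x (j + 1) - xp (card S - 1) x j) *\<^sub>R ord_vertex r S j)"
  by (simp only: iota_inv_def xp_def Let_def)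

lemma iota_inv_cong:
  assumes "\<forall>t\<in>{1..card S - 1}. x t = y t"
  shows "iota_inv r S x = iota_inv r S y"
proof -
  have e: "xp (card S - 1) x i = xp (card S - 1) y i" if "i \<le> card S - 1 + 1" for i
    using assms that unfolding xp_def by auto
  show ?thesis unfolding iota_inv_alt
  proof (intro sum.cong refl)
    fix j assume "j \<in> {..card S - 1}"
    then have "Suc j \<le> card S - 1 + 1" "j \<le> card S - 1 + 1" by auto
    then show "(xp (card S - 1) x (j + 1) - xp (card S - 1) x j) *\<^sub>R ord_vertex r S j =
      (xp (card S - 1) y (j + 1) - xp (card S - 1) y j) *\<^sub>R ord_vertex r S j"
      using e by simp
  qed
qed

lemma iota_inv_inj:
  assumes "simplex_vs S" "S \<subseteq> X" "linear_order_on X r" "iota_inv r S x = iota_inv r S y"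
  shows "\<forall>t\<in>{1..card S - 1}. x t = y t"
proof -
  define m where "m = card S - 1"
  have fS: "finite S" and ne: "S \<noteq> {}" and ai: "\<not> affine_dependent S"
    using assms(1) unfolding simplex_vs_def by auto
  have cS: "card S = Suc m" using fS ne m_def by (simp add: card_gt_0_iff)
  define cx where "cx j = xp m x (Suc j) - xp m x j" for j
  define cy where "cy j = xp m y (Suc j) - xp m y j" for j
  have bij: "bij_betw (rk r S) S {..m}"
    using rk_bij[OF fS assms(2,3)] cS by (simp add: lessThan_Suc_atMost)
  have re: "(\<Sum>w\<in>S. g (rk r S w) *\<^sub>R w) = (\<Sum>j\<le>m. g j *\<^sub>R ord_vertex r S j)" for g :: "nat \<Rightarrow> real"
  proof -
    have "(\<Sum>w\<in>S. g (rk r S w) *\<^sub>R w) = (\<Sum>w\<in>S. (\<lambda>j. g j *\<^sub>R ord_vertex r S j) (rk r S w))"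
      using ord_vertex_rk2[OF fS assms(2,3)] by (intro sum.cong) auto
    also have "\<dots> = (\<Sum>j\<le>m. g j *\<^sub>R ord_vertex r S j)"
      by (rule sum.reindex_bij_betw[OF bij])
    finally show ?thesis .
  qed
  have re2: "(\<Sum>w\<in>S. g (rk r S w)) = (\<Sum>j\<le>m. g j)" for g :: "nat \<Rightarrow> real"
    by (rule sum.reindex_bij_betw[OF bij])
  define U where "U w = cx (rk r S w) - cy (rk r S w)" for w
  have "(\<Sum>w\<in>S. U w *\<^sub>R w) = (\<Sum>j\<le>m. (cx j - cy j) *\<^sub>R ord_vertex r S j)"
    unfolding U_def by (rule re)
  also have "\<dots> = (\<Sum>j\<le>m. cx j *\<^sub>R ord_vertex r S j) - (\<Sum>j\<le>m. cy j *\<^sub>R ord_vertex r S j)"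
    by (simp add: scaleR_left_diff_distrib sum_subtractf)
  also have "\<dots> = iota_inv r S x - iota_inv r S y"
    unfolding iota_inv_alt cx_def cy_def m_def by simp
  also have "\<dots> = 0" using assms(4) by simp
  finally have s1: "(\<Sum>w\<in>S. U w *\<^sub>R w) = 0" .
  have tel: "(\<Sum>j\<le>m. xp m z (Suc j) - xp m z j) = 1" for z
    using sum_Suc_diff[of 0 m "xp m z"] by (simp add: atLeast0AtMost xp_def)
  have "(\<Sum>w\<in>S. U w) = (\<Sum>j\<le>m. cx j - cy j)" unfolding U_def by (rule re2)
  also have "\<dots> = 0" unfolding cx_def cy_def using tel[of x] tel[of y] by (simp add: sum_subtractf)
  finally have s0: "sum U S = 0" .
  have "\<not> (\<exists>U. sum U S = 0 \<and> (\<exists>v\<in>S. U v \<noteq> 0) \<and> (\<Sum>v\<in>S. U v *\<^sub>R v) = 0)"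
    using ai affine_dependent_explicit_finite[OF fS] by simp
  then have U0: "\<forall>w\<in>S. U w = 0" using s0 s1 by blast
  have ceq: "cx j = cy j" if "j \<le> m" for j
  proof -
    have "ord_vertex r S j \<in> S \<and> rk r S (ord_vertex r S j) = j"
      using ord_vertex_rk[OF fS assms(2,3)] that cS by auto
    then show ?thesis using U0 unfolding U_def by force
  qed
  have "j \<le> Suc m \<Longrightarrow> xp m x j = xp m y j" for j
  proof (induction j)
    case 0 then show ?case by (simp add: xp_def)
  next
    case (Suc j)
    then have "cx j = cy j" using ceq by simp
    then show ?case using Suc unfolding cx_def cy_def by simp
  qed
  then have "\<forall>t\<in>{1..m}. xp m x t = xp m y t" by auto
  then show ?thesis unfolding m_def[symmetric] xp_def by auto
qed

definition piece :: "('a \<times> 'a) set \<Rightarrow> 'a::euclidean_space set \<Rightarrow> nat \<Rightarrow> nat \<Rightarrow> (nat \<Rightarrow> nat) \<Rightarrow> (nat \<Rightarrow> nat) \<Rightarrow> 'a set" where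
  "piece r S l m k p = iota_inv r S ` (cube_vertex l m k p ` {..m})"

definition pcond :: "nat \<Rightarrow> nat \<Rightarrow> (nat \<Rightarrow> nat) \<Rightarrow> (nat \<Rightarrow> nat) \<Rightarrow> bool" where
  "pcond l m k p \<longleftrightarrow> (\<forall>t\<in>{1..m}. k t < 2 ^ l) \<and> p permutes {1..m} \<and>
              (\<forall>i\<le>m. \<forall>s t. 1 \<le> s \<and> s \<le> t \<and> t \<le> m \<longrightarrow>
                  cube_vertex l m k p i s \<le> cube_vertex l m k p i t)"

lemma pieces_eq:
  assumes "card S - 1 \<noteq> 0"
  shows "crystal_pieces r l S = {piece r S l (card S - 1) k p | k p. pcond l (card S - 1) k p}"
proof -
  have e: "{cube_vertex l m k p i | i. i \<le> m} = cube_vertex l m k p ` {..m}" for m k p by auto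
  show ?thesis using assms unfolding crystal_pieces_def Let_def piece_def pcond_def e by simp
qed

lemma piece_restrict:
  "piece r S l (card S - 1) (restrict k {1..card S - 1}) p = piece r S l (card S - 1) k p"
proof -
  have "iota_inv r S (cube_vertex l (card S - 1) (restrict k {1..card S - 1}) p i) =
        iota_inv r S (cube_vertex l (card S - 1) k p i)" for i
    by (rule iota_inv_cong) (simp add: cube_vertex_def)
  then show ?thesis unfolding piece_def image_image by simp
qed

lemma pcond_restrict:
  assumes "pcond l m k p" shows "restrict k {1..m} \<in> (\<Pi>\<^sub>E t\<in>{1..m}. {..<2^l})"
  using assms unfolding pcond_def by auto

lemma pieces_finite:
  assumes "finite S"
  shows "finite (crystal_pieces r l S)"
proof (cases "card S - 1 = 0")
  case True
  then show ?thesis unfolding crystal_pieces_def Let_def by simp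
next
  case False
  define m where "m = card S - 1"
  have "crystal_pieces r l S \<subseteq> (\<lambda>(k, p). piece r S l m k p) ` ((\<Pi>\<^sub>E t\<in>{1..m}. {..<2^l}) \<times> {p. p permutes {1..m}})"
  proof
    fix U assume "U \<in> crystal_pieces r l S"
    then obtain k p where U: "U = piece r S l m k p" "pcond l m k p"
      using pieces_eq[OF False] m_def by auto
    then have "U = piece r S l m (restrict k {1..m}) p" using piece_restrict m_def by metis
    moreover have "(restrict k {1..m}, p) \<in> (\<Pi>\<^sub>E t\<in>{1..m}. {..<2^l}) \<times> {p. p permutes {1..m}}"
      using pcond_restrict[OF U(2)] U(2) unfolding pcond_def by auto
    ultimately show "U \<in> (\<lambda>(k, p). piece r S l m k p) ` ((\<Pi>\<^sub>E t\<in>{1..m}. {..<2^l}) \<times> {p. p permutes {1..m}})"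
      by (intro image_eqI[where x = "(restrict k {1..m}, p)"]) auto
  qed
  moreover have "finite ((\<Pi>\<^sub>E t\<in>{1..m}. {..<(2::nat)^l}) \<times> {p. p permutes {1..m}})"
    by (intro finite_cartesian_product finite_PiE finite_permutations) auto
  ultimately show ?thesis using finite_subset by blast
qed

lemma pieces_card:
  assumes "finite S" "U \<in> crystal_pieces r l S"
  shows "finite U \<and> card U \<le> card S"
proof (cases "card S - 1 = 0")
  case True
  then show ?thesis using assms unfolding crystal_pieces_def Let_def by simp
next
  case False
  then obtain k p where U: "U = piece r S l (card S - 1) k p"
    using pieces_eq[OF False] assms(2) by auto
  have "card U \<le> card {..card S - 1}" unfolding U piece_def
    by (metis card_image_le finite_atMost finite_imageI image_image)
  also have "\<dots> = card S" using False by simp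
  finally show ?thesis unfolding U piece_def by simp
qed

lemma near:
  fixes a b :: nat
  assumes "(real a + (if P then 1 else 0)) / 2 ^ l = (real b + (if Q then 1 else 0)) / (2::real) ^ l"
  shows "a \<in> {b - 1, b, b + 1}"
proof -
  have "real a + (if P then 1 else 0) = real b + (if Q then 1 else 0)"
    using assms by (simp add: divide_cancel_right)
  then have "real a \<le> real b + 1" "real b \<le> real a + 1" by (auto split: if_splits)
  then have "a \<le> b + 1" "b \<le> a + 1" by linarith+
  then show ?thesis by auto
qed

lemma card_near: "card {b - 1, b, b + 1::nat} \<le> 3"
  by (rule order_trans[OF card_insert_le_m1]) (auto simp: card_insert_if)

lemma pieces_deg:
  assumes S: "simplex_vs S" "S \<subseteq> X" "linear_order_on X r"
  shows "card {U \<in> crystal_pieces r l S. q \<in> U} \<le> 3 ^ (card S - 1) * fact (card S - 1)"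
proof (cases "card S - 1 = 0")
  case True
  then have "{U \<in> crystal_pieces r l S. q \<in> U} \<subseteq> {S}" unfolding crystal_pieces_def Let_def by auto
  then have "card {U \<in> crystal_pieces r l S. q \<in> U} \<le> 1"
    using card_mono[of "{S}"] by fastforce
  then show ?thesis using True by simp
next
  case False
  define m where "m = card S - 1"
  have m0: "m \<noteq> 0" using False m_def by simp
  show ?thesis
  proof (cases "{U \<in> crystal_pieces r l S. q \<in> U} = {}")
    case True
    then show ?thesis by (simp only: card.empty)
  next
    case False
    then obtain U0 where U0: "U0 \<in> crystal_pieces r l S" "q \<in> U0" by blast
    then obtain k0 p0 where U0': "U0 = piece r S l m k0 p0"
      using pieces_eq[OF m0[unfolded m_def]] m_def by auto
    then obtain i0 where i0: "q = iota_inv r S (cube_vertex l m k0 p0 i0)"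
      using U0(2) unfolding piece_def by auto
    define A where "A = (\<Pi>\<^sub>E t\<in>{1..m}. {k0 t - 1, k0 t, k0 t + 1})"
    define Pm where "Pm = {p. p permutes {1..m}}"
    have sub: "{U \<in> crystal_pieces r l S. q \<in> U} \<subseteq> (\<lambda>(k, p). piece r S l m k p) ` (A \<times> Pm)"
    proof
      fix U assume "U \<in> {U \<in> crystal_pieces r l S. q \<in> U}"
      then have U1: "U \<in> crystal_pieces r l S" "q \<in> U" by auto
      then obtain k p where U: "U = piece r S l m k p" "pcond l m k p"
        using pieces_eq[OF m0[unfolded m_def]] m_def by auto
      then obtain i where i: "q = iota_inv r S (cube_vertex l m k p i)"
        using U1(2) unfolding piece_def by auto
      have eq: "\<forall>t\<in>{1..m}. cube_vertex l m k p i t = cube_vertex l m k0 p0 i0 t"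
        using iota_inv_inj[OF S] i i0 m_def by metis
      have "restrict k {1..m} \<in> A"
        unfolding A_def
      proof (rule PiE_I)
        fix t assume "t \<in> {1..m}"
        then have "cube_vertex l m k p i t = cube_vertex l m k0 p0 i0 t" using eq by blast
        then show "restrict k {1..m} t \<in> {k0 t - 1, k0 t, k0 t + 1}"
          using near \<open>t \<in> {1..m}\<close> unfolding cube_vertex_def by auto
      qed auto
      moreover have "p \<in> Pm" using U(2) unfolding pcond_def Pm_def by auto
      moreover have "U = piece r S l m (restrict k {1..m}) p" using piece_restrict U(1) m_def by metis
      ultimately show "U \<in> (\<lambda>(k, p). piece r S l m k p) ` (A \<times> Pm)"
        by (intro image_eqI[where x = "(restrict k {1..m}, p)"]) auto
    qed
    have fA: "finite A" unfolding A_def by (intro finite_PiE) auto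
    have fP: "finite Pm" unfolding Pm_def by (intro finite_permutations) auto
    have cA: "card A \<le> 3 ^ m"
    proof -
      have "card A = (\<Prod>t\<in>{1..m}. card {k0 t - 1, k0 t, k0 t + 1})"
        unfolding A_def by (rule card_PiE) auto
      also have "\<dots> \<le> 3 ^ m"
        by (rule prod_le_power) (use card_near in auto)
      finally show ?thesis .
    qed
    have cP: "card Pm = fact m" unfolding Pm_def by (rule card_permutations) auto
    have "card {U \<in> crystal_pieces r l S. q \<in> U} \<le> card ((\<lambda>(k, p). piece r S l m k p) ` (A \<times> Pm))"
      using sub fA fP by (intro card_mono) auto
    also have "\<dots> \<le> card (A \<times> Pm)" by (rule card_image_le) (use fA fP in auto)
    also have "\<dots> = card A * card Pm" by (rule card_cartesian_product)
    also have "\<dots> \<le> 3 ^ m * fact m" using cA cP by simp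
    finally show ?thesis unfolding m_def .
  qed
qed

lemma pcond_zero: "pcond l m (\<lambda>_. 0) id"
  unfolding pcond_def
proof (intro conjI allI impI ballI)
  show "id permutes {1..m}" by (rule permutes_id)
next
  fix i s t assume "i \<le> m" "1 \<le> s \<and> s \<le> t \<and> t \<le> m"
  then show "cube_vertex l m (\<lambda>_. 0) id i s \<le> cube_vertex l m (\<lambda>_. 0) id i t"
    unfolding cube_vertex_def by auto
qed auto

lemma pieces_nonempty:
  assumes "S \<noteq> {}"
  shows "\<exists>U\<in>crystal_pieces r l S. U \<noteq> {}"
proof (cases "card S - 1 = 0")
  case True
  then show ?thesis using assms unfolding crystal_pieces_def Let_def by auto
next
  case False
  have "piece r S l (card S - 1) (\<lambda>_. 0) id \<in> crystal_pieces r l S"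
    using pieces_eq[OF False] pcond_zero by blast
  moreover have "piece r S l (card S - 1) (\<lambda>_. 0) id \<noteq> {}" unfolding piece_def by auto
  ultimately show ?thesis by blast
qed

theorem lemma3p3:
  fixes K :: "'a::euclidean_space set set" and r :: "('a \<times> 'a) set"
  assumes "geom_simplicial_complex K" and "finite K" and "K \<noteq> {}"
    and "linear_order_on (\<Union>K) r"
  shows "\<exists>C::nat. \<forall>l::nat. \<exists>C'\<le>C. \<exists>c. is_coloring (crystalline r K l) c C'"
proof -
  have sv: "\<And>S. S \<in> K \<Longrightarrow> simplex_vs S" using assms(1) unfolding geom_simplicial_complex_def by blast
  have fS: "\<And>S. S \<in> K \<Longrightarrow> finite S" and neS: "\<And>S. S \<in> K \<Longrightarrow> S \<noteq> {}"
    using sv unfolding simplex_vs_def by auto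
  define a where "a = Max (card ` K)"
  define b where "b = (\<Sum>S\<in>K. 3 ^ (card S - 1) * fact (card S - 1) :: nat)"
  define B where "B = a * (b * a) * (b * a) * (b * 2 ^ a)"
  show ?thesis
  proof (rule exI[of _ B], rule allI)
    fix l
    define L where "L = crystalline r K l"
    define P where "P = (\<Union>S\<in>K. crystal_pieces r l S)"
    have Leq: "L = {T. T \<noteq> {} \<and> (\<exists>U\<in>P. T \<subseteq> U)}"
      unfolding L_def P_def crystalline_def by auto
    have fP: "finite P" unfolding P_def
    proof (rule finite_UN_I[OF assms(2)])
      fix S assume "S \<in> K"
      then show "finite (crystal_pieces r l S)" by (rule pieces_finite[OF fS])
    qed
    have aP: "\<forall>U\<in>P. finite U \<and> card U \<le> a"
    proof
      fix U assume "U \<in> P"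
      then obtain S where S: "S \<in> K" "U \<in> crystal_pieces r l S" unfolding P_def by blast
      have "finite U \<and> card U \<le> card S" using pieces_card[OF fS[OF S(1)] S(2)] .
      moreover have "card S \<le> a" unfolding a_def using assms(2) S(1) by (intro Max_ge) auto
      ultimately show "finite U \<and> card U \<le> a" by linarith
    qed
    have bP: "\<forall>q. card {U\<in>P. q \<in> U} \<le> b"
    proof
      fix q
      have "{U\<in>P. q \<in> U} = (\<Union>S\<in>K. {U \<in> crystal_pieces r l S. q \<in> U})" unfolding P_def by blast
      then have "card {U\<in>P. q \<in> U} \<le> (\<Sum>S\<in>K. card {U \<in> crystal_pieces r l S. q \<in> U})"
        using card_UN_le[OF assms(2)] by simp
      also have "\<dots> \<le> b" unfolding b_def
      proof (rule sum_mono)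
        fix S assume "S \<in> K"
        then have "S \<subseteq> \<Union>K" by blast
        then show "card {U \<in> crystal_pieces r l S. q \<in> U} \<le> 3 ^ (card S - 1) * fact (card S - 1)"
          by (rule pieces_deg[OF sv[OF \<open>S \<in> K\<close>] _ assms(4)])
      qed
      finally show "card {U\<in>P. q \<in> U} \<le> b" .
    qed
    have fL: "finite L"
    proof -
      have "L \<subseteq> (\<Union>U\<in>P. Pow U)" unfolding Leq by blast
      moreover have "finite (\<Union>U\<in>P. Pow U)" using fP aP by auto
      ultimately show ?thesis using finite_subset by blast
    qed
    obtain S0 where S0: "S0 \<in> K" using assms(3) by blast
    obtain U0 where U0: "U0 \<in> crystal_pieces r l S0" "U0 \<noteq> {}" using pieces_nonempty[OF neS[OF S0]] by blast
    have "U0 \<in> L" unfolding Leq P_def using S0 U0 by blast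
    then have neL: "L \<noteq> {}" by blast
    define T where "T = top_simplices L"
    have "Max (card ` L) \<in> card ` L" using fL neL by (intro Max_in) auto
    then obtain D0 where "D0 \<in> L" "card D0 = Max (card ` L)" by (elim imageE) auto
    then have neT: "T \<noteq> {}" unfolding T_def top_simplices_def by blast
    have TL: "T \<subseteq> L" unfolding T_def top_simplices_def by blast
    have fT: "finite T" using fL TL finite_subset by blast
    define R where "R D D' \<longleftrightarrow> star L D \<inter> star L D' \<noteq> {}" for D D'
    have symR: "\<And>x y. R x y \<Longrightarrow> R y x" unfolding R_def by blast
    have deg: "\<forall>x\<in>T. card {y\<in>T. y \<noteq> x \<and> R x y} \<le> B"
    proof
      fix D assume "D \<in> T"
      then have DL: "D \<in> L" using TL by blast
      have "card {y\<in>T. y \<noteq> D \<and> R D y} \<le> card {D'\<in>L. star L D \<inter> star L D' \<noteq> {}}"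
        using TL fL unfolding R_def by (intro card_mono) auto
      also have "\<dots> \<le> B" unfolding B_def by (rule conflict_bound[OF fP aP bP Leq DL])
      finally show "card {y\<in>T. y \<noteq> D \<and> R D y} \<le> B" .
    qed
    have ex: "\<exists>c. (\<forall>x\<in>T. c x \<le> B) \<and> (\<forall>x\<in>T. \<forall>y\<in>T. x \<noteq> y \<and> R x y \<longrightarrow> c x \<noteq> c y)"
    proof (rule greedy_coloring[of T R B])
      show "finite T" by (rule fT)
      show "\<And>x y. R x y \<Longrightarrow> R y x" by (rule symR)
      show "\<forall>x\<in>T. card {y\<in>T. y \<noteq> x \<and> R x y} \<le> B" by (rule deg)
    qed
    obtain c where c: "\<forall>x\<in>T. c x \<le> B" "\<forall>x\<in>T. \<forall>y\<in>T. x \<noteq> y \<and> R x y \<longrightarrow> c x \<noteq> c y"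
      using ex by (elim exE conjE) (rule that; assumption)
    obtain C' c' where cc: "C' \<le> B" "c' ` T = {0..C'}" "\<forall>x\<in>T. \<forall>y\<in>T. c x \<noteq> c y \<longrightarrow> c' x \<noteq> c' y"
      using compress_coloring[OF fT neT c(1)] by (elim exE conjE) (rule that; assumption)
    have "is_coloring L c' C'"
      unfolding is_coloring_def T_def[symmetric]
    proof (intro conjI ballI impI)
      show "c' ` T = {0..C'}" by (rule cc(2))
    next
      fix D D' assume "D \<in> T" "D' \<in> T" "D \<noteq> D' \<and> star L D \<inter> star L D' \<noteq> {}"
      then show "c' D \<noteq> c' D'" using c(2) cc(3) unfolding R_def by blast
    qed
    then show "\<exists>C'\<le>B. \<exists>c. is_coloring (crystalline r K l) c C'" using cc(1) unfolding L_def by blast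
  qed
qed

end
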